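(* Let $\alpha\in\mathbb{R}$ and $0<\beta\le\frac14$. Then $\Theta_\alpha$ maps $\mathfrak{T}_1(F_1(\alpha,2\beta))$ bijectively onto $\mathfrak{T}_2(F_2(\alpha,2\beta))$; $\Theta_\alpha(\mathfrak{S}_1(F_1(\alpha,\beta)))=\mathfrak{S}_2(F_2(\alpha,\beta))$; and $\Theta_\alpha(|p|^2)=|\Theta_\alpha(p)|^2$ for every $p\in\mathfrak{T}_1(F_1(\alpha,\beta))$.
   Context: $\mathbb{T}=\mathbb{R}/\mathbb{Z}$, $e_j(x)=e^{2\pi i jx}$, $e_{(j,k)}(x,y)=e_j(x)e_k(y)$. $\mathfrak{T}_d$ is the algebra of trigonometric polynomials on $\mathbb{T}^d$ (finite frequency set); for $F\subseteq\mathbb{Z}^d$, $\mathfrak{T}_d(F)=\{t\in\mathfrak{T}_d:\mathrm{freq}(t)\subseteq F\}$ and $\mathfrak{S}_d(F)=\{|p|^2:p\in\mathfrak{T}_d(F)\}$. For $\alpha\in\mathbb{R}$, $\theta_\alpha(j)$ is the smallest integer minimizing $|\theta_\alpha(j)-j\alpha|$, and $\Theta_\alpha:\mathfrak{T}_1\to\mathfrak{T}_2$ is $\Theta_\alpha(t)(x,y)=\sum_{j}\widehat t(j)e_j(x)e_{\theta_\alpha(j)}(y)$. For $\beta>0$: $F_1(\alpha,\beta)=\{j\in\mathbb{Z}:|\theta_\alpha(j)-j\alpha|<\beta\}$ and $F_2(\alpha,\beta)=\{(j,k)\in\mathbb{Z}^2:|k-j\alpha|<\beta\}$. *)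

theory Defs
  imports "HOL-Analysis.Analysis"
begin

text \<open>Characters on the torus; functions on T^d are represented as 1-periodic
functions on R^d (here real and real * real).\<close>

definition ech :: "int \<Rightarrow> real \<Rightarrow> complex" where
  "ech j x = exp (2 * of_real pi * \<i> * of_int j * of_real x)"

definition ech2 :: "int \<times> int \<Rightarrow> real \<times> real \<Rightarrow> complex" where
  "ech2 jk xy = ech (fst jk) (fst xy) * ech (snd jk) (snd xy)"

definition trig1 :: "(real \<Rightarrow> complex) set" where
  "trig1 = {t. \<exists>S c. finite S \<and> t = (\<lambda>x. \<Sum>j\<in>S. c j * ech j x)}"

definition trig2 :: "(real \<times> real \<Rightarrow> complex) set" where
  "trig2 = {t. \<exists>S c. finite S \<and> t = (\<lambda>xy. \<Sum>jk\<in>S. c jk * ech2 jk xy)}"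

definition fourier1 :: "(real \<Rightarrow> complex) \<Rightarrow> int \<Rightarrow> complex" where
  "fourier1 t j = integral {0..1} (\<lambda>x. t x * ech (- j) x)"

definition fourier2 :: "(real \<times> real \<Rightarrow> complex) \<Rightarrow> int \<times> int \<Rightarrow> complex" where
  "fourier2 t jk = integral (cbox (0,0) (1,1)) (\<lambda>xy. t xy * ech2 (- fst jk, - snd jk) xy)"

definition freq1 :: "(real \<Rightarrow> complex) \<Rightarrow> int set" where
  "freq1 t = {j. fourier1 t j \<noteq> 0}"

definition freq2 :: "(real \<times> real \<Rightarrow> complex) \<Rightarrow> (int \<times> int) set" where
  "freq2 t = {jk. fourier2 t jk \<noteq> 0}"

definition T1 :: "int set \<Rightarrow> (real \<Rightarrow> complex) set" where
  "T1 F = {t \<in> trig1. freq1 t \<subseteq> F}"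

definition T2 :: "(int \<times> int) set \<Rightarrow> (real \<times> real \<Rightarrow> complex) set" where
  "T2 F = {t \<in> trig2. freq2 t \<subseteq> F}"

definition S1 :: "int set \<Rightarrow> (real \<Rightarrow> complex) set" where
  "S1 F = {(\<lambda>x. complex_of_real ((cmod (p x))\<^sup>2)) | p. p \<in> T1 F}"

definition S2 :: "(int \<times> int) set \<Rightarrow> (real \<times> real \<Rightarrow> complex) set" where
  "S2 F = {(\<lambda>xy. complex_of_real ((cmod (p xy))\<^sup>2)) | p. p \<in> T2 F}"

definition theta :: "real \<Rightarrow> int \<Rightarrow> int" where
  "theta \<alpha> j = (LEAST k::int. \<forall>m::int. \<bar>real_of_int k - real_of_int j * \<alpha>\<bar> \<le> \<bar>real_of_int m - real_of_int j * \<alpha>\<bar>)"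

definition Theta :: "real \<Rightarrow> (real \<Rightarrow> complex) \<Rightarrow> (real \<times> real \<Rightarrow> complex)" where
  "Theta \<alpha> t = (\<lambda>(x, y). \<Sum>j\<in>freq1 t. fourier1 t j * ech j x * ech (theta \<alpha> j) y)"

definition F1 :: "real \<Rightarrow> real \<Rightarrow> int set" where
  "F1 \<alpha> \<beta> = {j. \<bar>real_of_int (theta \<alpha> j) - real_of_int j * \<alpha>\<bar> < \<beta>}"

definition F2 :: "real \<Rightarrow> real \<Rightarrow> (int \<times> int) set" where
  "F2 \<alpha> \<beta> = {(j, k). \<bar>real_of_int k - real_of_int j * \<alpha>\<bar> < \<beta>}"

end

theory Submission imports Defs begin

lemma ech_add: "ech a x * ech b x = ech (a+b) x"
  by (simp add: ech_def exp_add[symmetric] algebra_simps)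

lemma ech_diff: "ech (a - b) x = ech a x * ech (-b) x"
  by (simp add: ech_add)

lemma ech_zero[simp]: "ech 0 x = 1" by (simp add: ech_def)

lemma ech_zero_fun: "ech 0 = (\<lambda>x. 1)" by (rule ext) simp

lemma ech_at0[simp]: "ech n 0 = 1" by (simp add: ech_def)

lemma cnj_ech: "cnj (ech j x) = ech (-j) x"
  by (simp add: ech_def exp_cnj)

lemma cont_ech[continuous_intros]: "continuous_on S (ech j)"
  unfolding ech_def by (intro continuous_intros)

lemma ech_int_one: "ech n 1 = 1"
proof -
  have "ech n 1 = exp ((2 * of_int n * pi) * \<i>)" by (simp add: ech_def algebra_simps)
  also have "... = 1" by (rule exp_integer_2pi) simp
  finally show ?thesis .
qed

lemma ech_deriv: "(ech n has_vector_derivative (2 * of_real pi * \<i> * of_int n) * ech n x) (at x within S)"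
  unfolding ech_def
  by (auto intro!: derivative_eq_intros has_vector_derivative_real_field simp: algebra_simps)

lemma integral_ech: "integral {0..1} (ech n) = (if n = 0 then 1 else 0)"
proof (cases "n = 0")
  case True then show ?thesis by (simp add: ech_zero_fun)
next
  case False
  let ?a = "2 * of_real pi * \<i> * of_int n :: complex"
  have a: "?a \<noteq> 0" using False by simp
  have "(ech n has_integral (ech n 1 / ?a - ech n 0 / ?a)) {0..1}"
  proof (rule fundamental_theorem_of_calculus)
    fix x :: real assume "x \<in> {0..1}"
    show "((\<lambda>x. ech n x / ?a) has_vector_derivative ech n x) (at x within {0..1})"
      using has_vector_derivative_mult_right[OF ech_deriv[of n x "{0..1}"], of "1/?a"] a
      by (simp add: field_simps)
  qed simp
  then have "(ech n has_integral 0) {0..1}"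
    by (simp add: ech_int_one)
  then show ?thesis using False by (simp add: integral_unique)
qed

lemma fourier1_sum:
  assumes "finite S"
  shows "fourier1 (\<lambda>x. \<Sum>j\<in>S. c j * ech j x) m = (if m \<in> S then c m else 0)"
proof -
  have "fourier1 (\<lambda>x. \<Sum>j\<in>S. c j * ech j x) m
      = integral {0..1} (\<lambda>x. \<Sum>j\<in>S. c j * ech (j - m) x)"
    unfolding fourier1_def
    by (simp add: sum_distrib_right mult.assoc ech_add)
  also have "... = (\<Sum>j\<in>S. integral {0..1} (\<lambda>x. c j * ech (j - m) x))"
    by (rule integral_sum[OF assms]) (auto intro!: integrable_continuous_interval continuous_intros)
  also have "... = (\<Sum>j\<in>S. c j * (if j = m then 1 else 0))"
    by (intro sum.cong refl) (simp add: integral_ech[of "_ - m", unfolded eq_iff_diff_eq_0[symmetric]])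
  also have "... = (if m \<in> S then c m else 0)"
    using assms by (simp add: if_distrib cong: if_cong)
  finally show ?thesis .
qed

lemma integral_ech2: "integral (cbox (0,0) (1,1)) (\<lambda>xy. ech a (fst xy) * ech b (snd xy))
   = (if a = 0 \<and> b = 0 then 1 else 0)"
proof -
  have "integral (cbox (0,0) (1,1)) (\<lambda>xy. ech a (fst xy) * ech b (snd xy))
      = integral (cbox 0 1) (\<lambda>x. integral (cbox 0 1) (\<lambda>y. ech a x * ech b y))"
    using integral_prod_continuous[of 0 0 1 1 "\<lambda>xy. ech a (fst xy) * ech b (snd xy)"]
    by (simp add: continuous_on_mult continuous_on_compose2[OF cont_ech[of UNIV]] continuous_on_fst continuous_on_snd continuous_on_id)
  also have "... = integral {0..1} (\<lambda>x. ech a x * (if b = 0 then 1 else 0))"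
  proof -
    have i: "integral {0..1} (ech b) = (if b = 0 then 1 else 0)" by (rule integral_ech)
    have "integral (cbox 0 1) (\<lambda>y. ech a x * ech b y) = ech a x * (if b = 0 then 1 else 0)" for x
      using i by (simp add: integral_mult_right)
    then have "(\<lambda>x. integral (cbox 0 1) (\<lambda>y. ech a x * ech b y)) = (\<lambda>x. ech a x * (if b = 0 then 1 else 0))"
      by (rule ext)
    then show ?thesis by (simp only: interval_cbox)
  qed
  also have "... = (if a = 0 \<and> b = 0 then 1 else 0)"
    using integral_ech[of a] integral_ech[of b] integral_ech[of 0] by auto
  finally show ?thesis .
qed

lemma fourier2_sum:
  assumes "finite S"
  shows "fourier2 (\<lambda>xy. \<Sum>jk\<in>S. c jk * ech2 jk xy) m = (if m \<in> S then c m else 0)"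
proof -
  have "fourier2 (\<lambda>xy. \<Sum>jk\<in>S. c jk * ech2 jk xy) m
      = integral (cbox (0,0) (1,1)) (\<lambda>xy. \<Sum>jk\<in>S. c jk * (ech (fst jk - fst m) (fst xy) * ech (snd jk - snd m) (snd xy)))"
    unfolding fourier2_def ech2_def
    by (rule arg_cong[where f="integral _"], rule ext)
       (simp add: sum_distrib_right, rule sum.cong, simp_all add: ech_diff mult_ac)
  also have "... = (\<Sum>jk\<in>S. integral (cbox (0,0) (1,1)) (\<lambda>xy. c jk * (ech (fst jk - fst m) (fst xy) * ech (snd jk - snd m) (snd xy))))"
    by (rule integral_sum[OF assms])
       (auto intro!: integrable_continuous continuous_on_mult continuous_on_const continuous_on_compose2[OF cont_ech[of UNIV]] continuous_on_fst continuous_on_snd continuous_on_id)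
  also have "... = (\<Sum>jk\<in>S. c jk * (if jk = m then 1 else 0))"
  proof (intro sum.cong refl)
    fix jk
    show "integral (cbox (0,0) (1,1)) (\<lambda>xy. c jk * (ech (fst jk - fst m) (fst xy) * ech (snd jk - snd m) (snd xy)))
        = c jk * (if jk = m then 1 else 0)"
      using integral_ech2[of "fst jk - fst m" "snd jk - snd m"]
      by (cases jk; cases m) simp
  qed
  also have "... = (if m \<in> S then c m else 0)"
    using assms by (simp add: if_distrib cong: if_cong)
  finally show ?thesis .
qed

lemma freq1_sum: "finite S \<Longrightarrow> freq1 (\<lambda>x. \<Sum>j\<in>S. c j * ech j x) = {j\<in>S. c j \<noteq> 0}"
  unfolding freq1_def by (auto simp: fourier1_sum split: if_splits)

lemma freq2_sum: "finite S \<Longrightarrow> freq2 (\<lambda>xy. \<Sum>jk\<in>S. c jk * ech2 jk xy) = {jk\<in>S. c jk \<noteq> 0}"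
  unfolding freq2_def by (auto simp: fourier2_sum split: if_splits)

lemma trig1_expand:
  assumes "t \<in> trig1"
  shows "finite (freq1 t) \<and> t = (\<lambda>x. \<Sum>j\<in>freq1 t. fourier1 t j * ech j x)"
proof -
  obtain S c where S: "finite S" and t: "t = (\<lambda>x. \<Sum>j\<in>S. c j * ech j x)"
    using assms unfolding trig1_def by blast
  have fr: "freq1 t = {j\<in>S. c j \<noteq> 0}" using S t freq1_sum by simp
  have fo: "fourier1 t j = (if j \<in> S then c j else 0)" for j using S t fourier1_sum by simp
  have "(\<lambda>x. \<Sum>j\<in>freq1 t. fourier1 t j * ech j x) = (\<lambda>x. \<Sum>j\<in>S. c j * ech j x)"
    unfolding fr fo
    by (rule ext, rule sum.mono_neutral_cong_left) (use S in auto)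
  then show ?thesis using S fr t by simp
qed

lemma trig2_expand:
  assumes "t \<in> trig2"
  shows "finite (freq2 t) \<and> t = (\<lambda>xy. \<Sum>jk\<in>freq2 t. fourier2 t jk * ech2 jk xy)"
proof -
  obtain S c where S: "finite S" and t: "t = (\<lambda>xy. \<Sum>jk\<in>S. c jk * ech2 jk xy)"
    using assms unfolding trig2_def by blast
  have fr: "freq2 t = {j\<in>S. c j \<noteq> 0}" using S t freq2_sum by simp
  have fo: "fourier2 t j = (if j \<in> S then c j else 0)" for j using S t fourier2_sum by simp
  have "(\<lambda>xy. \<Sum>jk\<in>freq2 t. fourier2 t jk * ech2 jk xy) = (\<lambda>xy. \<Sum>jk\<in>S. c jk * ech2 jk xy)"
    unfolding fr fo
    by (rule ext, rule sum.mono_neutral_cong_left) (use S in auto)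
  then show ?thesis using S fr t by simp
qed

lemma Theta_sum:
  assumes "finite S"
  shows "Theta \<alpha> (\<lambda>x. \<Sum>j\<in>S. c j * ech j x) = (\<lambda>(x,y). \<Sum>j\<in>S. c j * ech j x * ech (theta \<alpha> j) y)"
  unfolding Theta_def freq1_sum[OF assms] fourier1_sum[OF assms]
  by (rule ext, clarsimp, rule sum.mono_neutral_cong_left) (use assms in auto)

lemma Theta_sum_gen:
  assumes "finite I"
  shows "Theta \<alpha> (\<lambda>x. \<Sum>i\<in>I. c i * ech (f i) x)
       = (\<lambda>(x,y). \<Sum>i\<in>I. c i * ech (f i) x * ech (theta \<alpha> (f i)) y)"
proof -
  let ?C = "\<lambda>d. \<Sum>i\<in>{i\<in>I. f i = d}. c i"
  have 1: "(\<lambda>x. \<Sum>i\<in>I. c i * ech (f i) x) = (\<lambda>x. \<Sum>d\<in>f ` I. ?C d * ech d x)"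
  proof (rule ext)
    fix x
    have "(\<Sum>i\<in>I. c i * ech (f i) x) = (\<Sum>d\<in>f ` I. \<Sum>i\<in>{i\<in>I. f i = d}. c i * ech (f i) x)"
      by (rule sum.image_gen[OF assms])
    also have "... = (\<Sum>d\<in>f ` I. ?C d * ech d x)"
      by (rule sum.cong[OF refl]) (simp add: sum_distrib_right)
    finally show "(\<Sum>i\<in>I. c i * ech (f i) x) = (\<Sum>d\<in>f ` I. ?C d * ech d x)" .
  qed
  have 2: "(\<Sum>i\<in>I. c i * ech (f i) x * ech (theta \<alpha> (f i)) y)
       = (\<Sum>d\<in>f ` I. ?C d * ech d x * ech (theta \<alpha> d) y)" for x y
  proof -
    have "(\<Sum>i\<in>I. c i * ech (f i) x * ech (theta \<alpha> (f i)) y) = (\<Sum>d\<in>f ` I. \<Sum>i\<in>{i\<in>I. f i = d}. c i * ech (f i) x * ech (theta \<alpha> (f i)) y)"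
      by (rule sum.image_gen[OF assms])
    also have "... = (\<Sum>d\<in>f ` I. ?C d * ech d x * ech (theta \<alpha> d) y)"
      by (rule sum.cong[OF refl]) (simp add: sum_distrib_right)
    finally show ?thesis .
  qed
  show ?thesis unfolding 1 Theta_sum[OF finite_imageI[OF assms]] using 2 by auto
qed

lemma theta_eq:
  assumes "\<bar>real_of_int k - real_of_int j * \<alpha>\<bar> < 1/2"
  shows "theta \<alpha> j = k"
  unfolding theta_def
proof (rule Least_equality)
  show "\<forall>m::int. \<bar>real_of_int k - real_of_int j * \<alpha>\<bar> \<le> \<bar>real_of_int m - real_of_int j * \<alpha>\<bar>"
  proof
    fix m :: int
    show "\<bar>real_of_int k - real_of_int j * \<alpha>\<bar> \<le> \<bar>real_of_int m - real_of_int j * \<alpha>\<bar>"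
    proof (cases "m = k")
      case False
      then have "\<bar>m - k\<bar> \<ge> (1::int)" by linarith
      then have "real_of_int \<bar>m - k\<bar> \<ge> 1" by linarith
      then have "\<bar>real_of_int m - real_of_int k\<bar> \<ge> 1" by simp
      then show ?thesis using assms by linarith
    qed simp
  qed
next
  fix y :: int
  assume "\<forall>m::int. \<bar>real_of_int y - real_of_int j * \<alpha>\<bar> \<le> \<bar>real_of_int m - real_of_int j * \<alpha>\<bar>"
  then have "\<bar>real_of_int y - real_of_int j * \<alpha>\<bar> \<le> \<bar>real_of_int k - real_of_int j * \<alpha>\<bar>" by blast
  then have "\<bar>real_of_int y - real_of_int k\<bar> < 1" using assms by linarith
  then have "\<bar>y - k\<bar> < 1" by linarith
  then show "k \<le> y" by linarith
qed

lemma Theta_trig2: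
  assumes "t \<in> trig1"
  shows "Theta \<alpha> t \<in> trig2 \<and> freq2 (Theta \<alpha> t) = (\<lambda>j. (j, theta \<alpha> j)) ` freq1 t
     \<and> (\<forall>j. fourier2 (Theta \<alpha> t) (j, theta \<alpha> j) = fourier1 t j)"
proof -
  let ?g = "\<lambda>j. (j, theta \<alpha> j)"
  let ?F = "freq1 t"
  have fin: "finite ?F" using trig1_expand[OF assms] by blast
  have inj: "inj_on ?g ?F" by (auto intro: inj_onI)
  have eq: "Theta \<alpha> t = (\<lambda>xy. \<Sum>jk\<in>?g ` ?F. fourier1 t (fst jk) * ech2 jk xy)"
    unfolding Theta_def sum.reindex[OF inj]
    by (rule ext) (auto simp: ech2_def mult_ac)
  have fin2: "finite (?g ` ?F)" using fin by simp
  have "Theta \<alpha> t \<in> trig2" unfolding eq trig2_def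
    by (rule CollectI, rule exI[of _ "?g ` ?F"], rule exI[of _ "\<lambda>jk. fourier1 t (fst jk)"]) (simp add: fin2)
  moreover have "freq2 (Theta \<alpha> t) = ?g ` ?F"
    unfolding eq freq2_sum[OF fin2] by (auto simp: freq1_def)
  moreover have "fourier2 (Theta \<alpha> t) (j, theta \<alpha> j) = fourier1 t j" for j
    unfolding eq fourier2_sum[OF fin2] by (auto simp: freq1_def)
  ultimately show ?thesis by blast
qed

lemma Theta_inj: "inj_on (Theta \<alpha>) trig1"
proof (rule inj_onI)
  fix s t assume s: "s \<in> trig1" and t: "t \<in> trig1" and e: "Theta \<alpha> s = Theta \<alpha> t"
  have "fourier1 s j = fourier1 t j" for j
  proof -
    have "fourier1 s j = fourier2 (Theta \<alpha> s) (j, theta \<alpha> j)"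
      using Theta_trig2[OF s, of \<alpha>] by simp
    also have "... = fourier2 (Theta \<alpha> t) (j, theta \<alpha> j)" by (simp only: e)
    also have "... = fourier1 t j"
      using Theta_trig2[OF t, of \<alpha>] by simp
    finally show ?thesis .
  qed
  then have f: "fourier1 s = fourier1 t" by blast
  then have fr: "freq1 s = freq1 t" by (simp add: freq1_def)
  have "s = (\<lambda>x. \<Sum>j\<in>freq1 s. fourier1 s j * ech j x)" using trig1_expand[OF s] by blast
  also have "... = (\<lambda>x. \<Sum>j\<in>freq1 t. fourier1 t j * ech j x)" by (simp only: f fr)
  also have "... = t" using trig1_expand[OF t] by simp
  finally show "s = t" .
qed

lemma Theta_maps: "t \<in> T1 (F1 \<alpha> \<gamma>) \<Longrightarrow> Theta \<alpha> t \<in> T2 (F2 \<alpha> \<gamma>)"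
  using Theta_trig2[of t \<alpha>] unfolding T1_def T2_def F1_def F2_def by auto

lemma Theta_surj:
  assumes g: "\<gamma> \<le> 1/2" and q: "q \<in> T2 (F2 \<alpha> \<gamma>)"
  shows "\<exists>t\<in>T1 (F1 \<alpha> \<gamma>). Theta \<alpha> t = q"
proof -
  let ?g = "\<lambda>j. (j, theta \<alpha> j)"
  let ?E = "freq2 q"
  let ?D = "fst ` ?E"
  have qt: "q \<in> trig2" and qE: "?E \<subseteq> F2 \<alpha> \<gamma>" using q by (auto simp: T2_def)
  have fin: "finite ?E" and qeq: "q = (\<lambda>xy. \<Sum>jk\<in>?E. fourier2 q jk * ech2 jk xy)"
    using trig2_expand[OF qt] by blast+
  have th: "k = theta \<alpha> j" if "(j,k) \<in> ?E" for j k
  proof -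
    have "\<bar>real_of_int k - real_of_int j * \<alpha>\<bar> < \<gamma>" using qE that by (auto simp: F2_def)
    then show ?thesis using g theta_eq[of k j \<alpha>] by simp
  qed
  have E: "?E = ?g ` ?D"
  proof
    show "?E \<subseteq> ?g ` ?D"
    proof
      fix jk assume a: "jk \<in> ?E"
      obtain j k where jk: "jk = (j,k)" by (cases jk)
      have k: "k = theta \<alpha> j" using th[of j k] a jk by simp
      have "j \<in> ?D" using a jk by force
      then show "jk \<in> ?g ` ?D" using jk k by blast
    qed
    show "?g ` ?D \<subseteq> ?E"
    proof
      fix x assume "x \<in> ?g ` ?D"
      then obtain jk where a: "jk \<in> ?E" and x: "x = ?g (fst jk)" by blast
      obtain j k where jk: "jk = (j,k)" by (cases jk)
      have k: "k = theta \<alpha> j" using th[of j k] a jk by simp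
      show "x \<in> ?E" using a jk x k by simp
    qed
  qed
  have memE: "(j, theta \<alpha> j) \<in> ?E" if "j \<in> ?D" for j
  proof -
    have "?g j \<in> ?g ` ?D" using that by (rule imageI)
    then show ?thesis by (subst E)
  qed
  have finD: "finite ?D" using fin by simp
  have inj: "inj_on ?g ?D" by (auto intro: inj_onI)
  define t where "t = (\<lambda>x. \<Sum>j\<in>?D. fourier2 q (j, theta \<alpha> j) * ech j x)"
  have tt: "t \<in> trig1" unfolding t_def trig1_def
    by (rule CollectI, rule exI[of _ ?D], rule exI[of _ "\<lambda>j. fourier2 q (j, theta \<alpha> j)"]) (simp add: finD)
  have ft: "freq1 t = ?D"
    unfolding t_def freq1_sum[OF finD] using memE by (auto simp: freq2_def)
  have "freq1 t \<subseteq> F1 \<alpha> \<gamma>"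
  proof
    fix j assume "j \<in> freq1 t"
    then have "(j, theta \<alpha> j) \<in> ?E" using ft memE by simp
    then show "j \<in> F1 \<alpha> \<gamma>" using qE by (auto simp: F1_def F2_def)
  qed
  then have "t \<in> T1 (F1 \<alpha> \<gamma>)" using tt by (simp add: T1_def)
  moreover have "Theta \<alpha> t = q"
  proof -
    have "Theta \<alpha> t = (\<lambda>(x,y). \<Sum>j\<in>?D. fourier2 q (j, theta \<alpha> j) * ech j x * ech (theta \<alpha> j) y)"
      unfolding t_def by (rule Theta_sum[OF finD])
    also have "... = (\<lambda>xy. \<Sum>jk\<in>?g ` ?D. fourier2 q jk * ech2 jk xy)"
      unfolding sum.reindex[OF inj] by (rule ext) (auto simp: ech2_def mult_ac)
    also have "... = q" by (simp only: E[symmetric] qeq[symmetric])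
    finally show ?thesis .
  qed
  ultimately show ?thesis by blast
qed


lemma sqsum:
  "complex_of_real ((cmod (\<Sum>j\<in>F. a j))\<^sup>2) = (\<Sum>i\<in>F \<times> F. a (fst i) * cnj (a (snd i)))"
proof -
  have "complex_of_real ((cmod (\<Sum>j\<in>F. a j))\<^sup>2) = (\<Sum>j\<in>F. a j) * cnj (\<Sum>j\<in>F. a j)"
    by (rule complex_norm_square)
  also have "... = (\<Sum>j\<in>F. \<Sum>j'\<in>F. a j * cnj (a j'))"
    by (simp add: sum_product)
  also have "... = (\<Sum>i\<in>F \<times> F. a (fst i) * cnj (a (snd i)))"
    by (simp add: sum.cartesian_product case_prod_beta)
  finally show ?thesis .
qed

lemma theta_sub:
  assumes "j \<in> F1 \<alpha> \<beta>" "j' \<in> F1 \<alpha> \<beta>" "\<beta> \<le> 1/4"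
  shows "theta \<alpha> (j - j') = theta \<alpha> j - theta \<alpha> j'"
proof (rule theta_eq)
  have a: "\<bar>real_of_int (theta \<alpha> j) - real_of_int j * \<alpha>\<bar> < \<beta>"
   and b: "\<bar>real_of_int (theta \<alpha> j') - real_of_int j' * \<alpha>\<bar> < \<beta>"
    using assms(1,2) by (auto simp: F1_def)
  have "real_of_int (theta \<alpha> j - theta \<alpha> j') - real_of_int (j - j') * \<alpha>
      = (real_of_int (theta \<alpha> j) - real_of_int j * \<alpha>) - (real_of_int (theta \<alpha> j') - real_of_int j' * \<alpha>)"
    by (simp add: algebra_simps)
  then show "\<bar>real_of_int (theta \<alpha> j - theta \<alpha> j') - real_of_int (j - j') * \<alpha>\<bar> < 1/2"
    using a b assms(3) by linarith
qed

lemma Theta_sq: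
  assumes p: "p \<in> T1 (F1 \<alpha> \<beta>)" and b: "\<beta> \<le> 1/4"
  shows "Theta \<alpha> (\<lambda>x. complex_of_real ((cmod (p x))\<^sup>2))
           = (\<lambda>xy. complex_of_real ((cmod (Theta \<alpha> p xy))\<^sup>2))"
proof -
  have pt: "p \<in> trig1" and pF: "freq1 p \<subseteq> F1 \<alpha> \<beta>" using p by (auto simp: T1_def)
  obtain F c where finF: "finite F" and FF: "F \<subseteq> F1 \<alpha> \<beta>"
    and peq: "p = (\<lambda>x. \<Sum>j\<in>F. c j * ech j x)"
    and thp: "Theta \<alpha> p = (\<lambda>(x,y). \<Sum>j\<in>F. c j * ech j x * ech (theta \<alpha> j) y)"
    using trig1_expand[OF pt] pF unfolding Theta_def by blast
  let ?C = "\<lambda>i. c (fst i) * cnj (c (snd i))"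
  let ?f = "\<lambda>i::int\<times>int. fst i - snd i"
  have 1: "(\<lambda>x. complex_of_real ((cmod (p x))\<^sup>2)) = (\<lambda>x. \<Sum>i\<in>F \<times> F. ?C i * ech (?f i) x)"
  proof (rule ext)
    fix x
    have "complex_of_real ((cmod (p x))\<^sup>2) = (\<Sum>i\<in>F \<times> F. (c (fst i) * ech (fst i) x) * cnj (c (snd i) * ech (snd i) x))"
      unfolding peq by (rule sqsum)
    also have "... = (\<Sum>i\<in>F \<times> F. ?C i * ech (?f i) x)"
      by (rule sum.cong[OF refl]) (simp add: cnj_ech ech_diff mult_ac)
    finally show "complex_of_real ((cmod (p x))\<^sup>2) = (\<Sum>i\<in>F \<times> F. ?C i * ech (?f i) x)" .
  qed
  have 2: "(\<Sum>i\<in>F \<times> F. ?C i * ech (?f i) x * ech (theta \<alpha> (?f i)) y)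
        = complex_of_real ((cmod (Theta \<alpha> p (x,y)))\<^sup>2)" for x y
  proof -
    have "complex_of_real ((cmod (Theta \<alpha> p (x,y)))\<^sup>2)
        = (\<Sum>i\<in>F \<times> F. (c (fst i) * ech (fst i) x * ech (theta \<alpha> (fst i)) y)
             * cnj (c (snd i) * ech (snd i) x * ech (theta \<alpha> (snd i)) y))"
      unfolding thp by (simp only: case_prod_conv sqsum)
    also have "... = (\<Sum>i\<in>F \<times> F. ?C i * ech (?f i) x * ech (theta \<alpha> (?f i)) y)"
    proof (rule sum.cong[OF refl])
      fix i assume "i \<in> F \<times> F"
      then have "theta \<alpha> (?f i) = theta \<alpha> (fst i) - theta \<alpha> (snd i)"
        using FF b by (auto intro!: theta_sub)
      then show "(c (fst i) * ech (fst i) x * ech (theta \<alpha> (fst i)) y)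
             * cnj (c (snd i) * ech (snd i) x * ech (theta \<alpha> (snd i)) y)
           = ?C i * ech (?f i) x * ech (theta \<alpha> (?f i)) y"
        by (simp only: ech_diff cnj_ech complex_cnj_mult) (simp add: mult_ac)
    qed
    finally show ?thesis by simp
  qed
  show ?thesis
    unfolding 1 Theta_sum_gen[OF finite_cartesian_product[OF finF finF]]
    using 2 by auto
qed

theorem lemma4:
  fixes \<alpha> \<beta> :: real
  assumes "0 < \<beta>" and "\<beta> \<le> 1/4"
  shows "bij_betw (Theta \<alpha>) (T1 (F1 \<alpha> (2 * \<beta>))) (T2 (F2 \<alpha> (2 * \<beta>)))
    \<and> Theta \<alpha> ` S1 (F1 \<alpha> \<beta>) = S2 (F2 \<alpha> \<beta>)
    \<and> (\<forall>p \<in> T1 (F1 \<alpha> \<beta>).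
         Theta \<alpha> (\<lambda>x. complex_of_real ((cmod (p x))\<^sup>2))
           = (\<lambda>xy. complex_of_real ((cmod (Theta \<alpha> p xy))\<^sup>2)))"
proof (intro conjI ballI)
  show "bij_betw (Theta \<alpha>) (T1 (F1 \<alpha> (2 * \<beta>))) (T2 (F2 \<alpha> (2 * \<beta>)))"
  proof (rule bij_betw_imageI)
    show "inj_on (Theta \<alpha>) (T1 (F1 \<alpha> (2 * \<beta>)))"
      by (rule inj_on_subset[OF Theta_inj]) (auto simp: T1_def)
    show "Theta \<alpha> ` T1 (F1 \<alpha> (2 * \<beta>)) = T2 (F2 \<alpha> (2 * \<beta>))"
    proof
      show "Theta \<alpha> ` T1 (F1 \<alpha> (2 * \<beta>)) \<subseteq> T2 (F2 \<alpha> (2 * \<beta>))"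
        using Theta_maps by blast
      show "T2 (F2 \<alpha> (2 * \<beta>)) \<subseteq> Theta \<alpha> ` T1 (F1 \<alpha> (2 * \<beta>))"
      proof
        fix q assume "q \<in> T2 (F2 \<alpha> (2 * \<beta>))"
        then obtain t where "t \<in> T1 (F1 \<alpha> (2 * \<beta>))" "Theta \<alpha> t = q"
          using Theta_surj[of "2 * \<beta>" q \<alpha>] assms(2) by auto
        then show "q \<in> Theta \<alpha> ` T1 (F1 \<alpha> (2 * \<beta>))" by blast
      qed
    qed
  qed
  show "Theta \<alpha> ` S1 (F1 \<alpha> \<beta>) = S2 (F2 \<alpha> \<beta>)"
  proof
    show "Theta \<alpha> ` S1 (F1 \<alpha> \<beta>) \<subseteq> S2 (F2 \<alpha> \<beta>)"
    proof
      fix u assume "u \<in> Theta \<alpha> ` S1 (F1 \<alpha> \<beta>)"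
      then obtain p where p: "p \<in> T1 (F1 \<alpha> \<beta>)"
        and u: "u = Theta \<alpha> (\<lambda>x. complex_of_real ((cmod (p x))\<^sup>2))"
        unfolding S1_def by blast
      have "u = (\<lambda>xy. complex_of_real ((cmod (Theta \<alpha> p xy))\<^sup>2))"
        using u Theta_sq[OF p assms(2)] by simp
      moreover have "Theta \<alpha> p \<in> T2 (F2 \<alpha> \<beta>)" using Theta_maps[OF p] .
      ultimately show "u \<in> S2 (F2 \<alpha> \<beta>)" unfolding S2_def by blast
    qed
    show "S2 (F2 \<alpha> \<beta>) \<subseteq> Theta \<alpha> ` S1 (F1 \<alpha> \<beta>)"
    proof
      fix u assume "u \<in> S2 (F2 \<alpha> \<beta>)"
      then obtain q where q: "q \<in> T2 (F2 \<alpha> \<beta>)"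
        and u: "u = (\<lambda>xy. complex_of_real ((cmod (q xy))\<^sup>2))"
        unfolding S2_def by blast
      obtain p where p: "p \<in> T1 (F1 \<alpha> \<beta>)" and pq: "Theta \<alpha> p = q"
        using Theta_surj[of \<beta> q \<alpha>] q assms(2) by auto
      have "u = Theta \<alpha> (\<lambda>x. complex_of_real ((cmod (p x))\<^sup>2))"
        using u Theta_sq[OF p assms(2)] pq by simp
      moreover have "(\<lambda>x. complex_of_real ((cmod (p x))\<^sup>2)) \<in> S1 (F1 \<alpha> \<beta>)"
        unfolding S1_def using p by blast
      ultimately show "u \<in> Theta \<alpha> ` S1 (F1 \<alpha> \<beta>)" by blast
    qed
  qed
next
  fix p assume "p \<in> T1 (F1 \<alpha> \<beta>)"
  then show "Theta \<alpha> (\<lambda>x. complex_of_real ((cmod (p x))\<^sup>2))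
           = (\<lambda>xy. complex_of_real ((cmod (Theta \<alpha> p xy))\<^sup>2))"
    using Theta_sq assms(2) by blast
qed

end
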